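(* Let $(\mu_0^3,\cdot,[-,-])$ be a transposed Poisson algebra structure on the associative algebra $\mu_0^3$. Then it is isomorphic to one of the following pairwise non-isomorphic algebras: $\mathbf{TP}(1,0)$, or $\mathbf{TP}(0,\alpha)$ with $\alpha\in\mathbb{C}$.
   Context: $\mu_0^3$ is the complex commutative associative algebra with basis $\{e_1,e_2,e_3\}$ and $e_1\cdot e_1=e_2$, $e_1\cdot e_2=e_2\cdot e_1=e_3$, other products zero. A transposed Poisson algebra is a triple $(\mathfrak{L},\cdot,[-,-])$ with $(\mathfrak{L},\cdot)$ commutative associative, $(\mathfrak{L},[-,-])$ a Lie algebra, and $2z\cdot[x,y]=[z\cdot x,y]+[x,z\cdot y]$ for all $x,y,z$. For $\alpha_2,\alpha_3\in\mathbb{C}$, $\mathbf{TP}(\alpha_2,\alpha_3)$ denotes $\mu_0^3$ with the bracket $[e_i,e_j]=(j-i)\sum_{t=i+j-1}^{3}\alpha_{t-i-j+3}e_t$ for $3\leq i+j\leq 4$, all other brackets of basis elements zero. Isomorphisms preserve both operations. *)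

theory Defs
  imports "HOL-Analysis.Analysis"
begin

text \<open>The underlying vector space of mu_0^3 is complex^3.  Basis vectors e_1, e_2, e_3
  are indexed by naturals 1,2,3 (mapped to the three distinct elements of the type 3).\<close>

type_synonym V3 = "complex ^ 3"

definition crd :: "V3 \<Rightarrow> nat \<Rightarrow> complex" where
  "crd x i = x $ (of_nat i :: 3)"

definition ebas :: "nat \<Rightarrow> V3" where
  "ebas i = (\<chi> k. if k = (of_nat i :: 3) then 1 else 0)"

definition mu0_tab :: "nat \<Rightarrow> nat \<Rightarrow> V3" where
  "mu0_tab i j = (if i = 1 \<and> j = 1 then ebas 2
                  else if (i = 1 \<and> j = 2) \<or> (i = 2 \<and> j = 1) then ebas 3 else 0)"

definition mu0 :: "V3 \<Rightarrow> V3 \<Rightarrow> V3" where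
  "mu0 x y = (\<Sum>i\<in>{1..3}. \<Sum>j\<in>{1..3}. (crd x i * crd y j) *s mu0_tab i j)"

definition tp_alpha :: "complex \<Rightarrow> complex \<Rightarrow> nat \<Rightarrow> complex" where
  "tp_alpha a2 a3 k = (if k = 2 then a2 else if k = 3 then a3 else 0)"

definition tp_tab :: "complex \<Rightarrow> complex \<Rightarrow> nat \<Rightarrow> nat \<Rightarrow> V3" where
  "tp_tab a2 a3 i j = (if 3 \<le> i + j \<and> i + j \<le> 4
      then of_int (int j - int i) *s (\<Sum>t\<in>{i+j-1..3}. tp_alpha a2 a3 (t + 3 - (i + j)) *s ebas t)
      else 0)"

definition TP :: "complex \<Rightarrow> complex \<Rightarrow> V3 \<Rightarrow> V3 \<Rightarrow> V3" where
  "TP a2 a3 x y = (\<Sum>i\<in>{1..3}. \<Sum>j\<in>{1..3}. (crd x i * crd y j) *s tp_tab a2 a3 i j)"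

definition clinear3 :: "(V3 \<Rightarrow> V3) \<Rightarrow> bool" where
  "clinear3 f \<longleftrightarrow> (\<forall>x y. f (x + y) = f x + f y) \<and> (\<forall>c x. f (c *s x) = c *s f x)"

definition cbilinear3 :: "(V3 \<Rightarrow> V3 \<Rightarrow> V3) \<Rightarrow> bool" where
  "cbilinear3 b \<longleftrightarrow> (\<forall>y. clinear3 (\<lambda>x. b x y)) \<and> (\<forall>x. clinear3 (\<lambda>y. b x y))"

definition is_lie :: "(V3 \<Rightarrow> V3 \<Rightarrow> V3) \<Rightarrow> bool" where
  "is_lie br \<longleftrightarrow> cbilinear3 br \<and> (\<forall>x. br x x = 0) \<and>
     (\<forall>x y z. br x (br y z) + br y (br z x) + br z (br x y) = 0)"

definition is_TP_on_mu0 :: "(V3 \<Rightarrow> V3 \<Rightarrow> V3) \<Rightarrow> bool" where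
  "is_TP_on_mu0 br \<longleftrightarrow> is_lie br \<and>
     (\<forall>x y z. 2 *s mu0 z (br x y) = br (mu0 z x) y + br x (mu0 z y))"

definition TP_iso :: "(V3 \<Rightarrow> V3 \<Rightarrow> V3) \<Rightarrow> (V3 \<Rightarrow> V3 \<Rightarrow> V3) \<Rightarrow> bool" where
  "TP_iso br1 br2 \<longleftrightarrow> (\<exists>\<phi>. clinear3 \<phi> \<and> bij \<phi> \<and>
      (\<forall>x y. \<phi> (mu0 x y) = mu0 (\<phi> x) (\<phi> y)) \<and>
      (\<forall>x y. \<phi> (br1 x y) = br2 (\<phi> x) (\<phi> y)))"

end

theory Submission
  imports Defs
begin

declare One_nat_def [simp del]

lemma ne3[simp]: "(1::3) \<noteq> 2" "(2::3) \<noteq> 1" "(1::3) \<noteq> 3" "(3::3) \<noteq> 1" "(2::3) \<noteq> 3" "(3::3) \<noteq> 2"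
  by simp_all

lemma veq3: "(x::V3) = y \<longleftrightarrow> x$1 = y$1 \<and> x$2 = y$2 \<and> x$3 = y$3"
  by (simp add: vec_eq_iff forall_3)

lemma set13: "{1..3::nat} = {1,2,3}" by auto
lemma set23: "{Suc (Suc 0)..3::nat} = {2,3}" "{2..3::nat} = {2,3}" "{Suc (Suc (Suc 0))..3::nat} = {3}" by auto

lemma ebas_c[simp]: "ebas 1 $ 1 = 1" "ebas 1 $ 2 = 0" "ebas 1 $ 3 = 0"
  "ebas 2 $ 1 = 0" "ebas 2 $ 2 = 1" "ebas 2 $ 3 = 0"
  "ebas 3 $ 1 = 0" "ebas 3 $ 2 = 0" "ebas 3 $ 3 = 1"
  by (simp_all add: ebas_def)

lemma ebas_c1[simp]: "ebas (Suc 0) $ 1 = 1" "ebas (Suc 0) $ 2 = 0" "ebas (Suc 0) $ 3 = 0"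
  by (simp_all add: ebas_def)

lemma crd_c[simp]: "crd x 1 = x$1" "crd x 2 = x$2" "crd x 3 = x$3"
  by (simp_all add: crd_def)

lemma mu0_c[simp]: "mu0 x y $ 1 = 0" "mu0 x y $ 2 = x$1*y$1" "mu0 x y $ 3 = x$1*y$2 + x$2*y$1"
  unfolding mu0_def set13 by (simp_all add: mu0_tab_def crd_def)

lemma TP_c[simp]: "TP a b x y $ 1 = 0" "TP a b x y $ 2 = a*(x$1*y$2 - x$2*y$1)"
   "TP a b x y $ 3 = b*(x$1*y$2 - x$2*y$1) + 2*a*(x$1*y$3 - x$3*y$1)"
  unfolding TP_def set13 by (simp_all add: tp_tab_def tp_alpha_def crd_def set23 algebra_simps)

lemma TP_is: "is_TP_on_mu0 (TP a b)"
  unfolding is_TP_on_mu0_def is_lie_def cbilinear3_def clinear3_def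
  by (simp add: veq3 algebra_simps)

lemma bil_expand:
  assumes "cbilinear3 br"
  shows "br x y = (x$1*y$1) *s br (ebas 1) (ebas 1) + (x$1*y$2) *s br (ebas 1) (ebas 2) + (x$1*y$3) *s br (ebas 1) (ebas 3)
   + (x$2*y$1) *s br (ebas 2) (ebas 1) + (x$2*y$2) *s br (ebas 2) (ebas 2) + (x$2*y$3) *s br (ebas 2) (ebas 3)
   + (x$3*y$1) *s br (ebas 3) (ebas 1) + (x$3*y$2) *s br (ebas 3) (ebas 2) + (x$3*y$3) *s br (ebas 3) (ebas 3)"
proof -
  have L1: "br (u+v) w = br u w + br v w" and L2: "br (c *s u) w = c *s br u w"
   and R1: "br w (u+v) = br w u + br w v" and R2: "br w (c *s u) = c *s br w u" for u v w c
    using assms unfolding cbilinear3_def clinear3_def by auto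
  have dx: "x$1 *s ebas 1 + x$2 *s ebas 2 + x$3 *s ebas 3 = x" for x by (simp add: veq3)
  have "br x y = br (x$1 *s ebas 1 + x$2 *s ebas 2 + x$3 *s ebas 3) (y$1 *s ebas 1 + y$2 *s ebas 2 + y$3 *s ebas 3)"
    by (simp only: dx)
  then show ?thesis by (simp add: L1 L2 R1 R2 vector_smult_assoc algebra_simps)
qed

lemma classify:
  assumes "is_TP_on_mu0 br"
  shows "br = TP (br (ebas 1) (ebas 2) $ 2) (br (ebas 1) (ebas 2) $ 3)"
proof -
  have bil: "cbilinear3 br" and alt: "\<And>x. br x x = 0"
   and tp: "\<And>x y z. 2 *s mu0 z (br x y) = br (mu0 z x) y + br x (mu0 z y)"
    using assms unfolding is_TP_on_mu0_def is_lie_def by auto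
  have L1: "br (u+v) w = br u w + br v w" and L2: "br (c *s u) w = c *s br u w"
   and R1: "br w (u+v) = br w u + br w v" and R2: "br w (c *s u) = c *s br w u" for u v w c
    using bil unfolding cbilinear3_def clinear3_def by auto
  have z0: "br w 0 = 0" for w using R2[of w 0 0] by simp
  have asym: "br u v = - br v u" for u v
  proof -
    have "0 = br (u+v) (u+v)" using alt by simp
    also have "... = br u v + br v u" by (simp only: L1 R1) (simp add: alt)
    finally show ?thesis by (metis eq_neg_iff_add_eq_0)
  qed
  define P where "P = br (ebas 1) (ebas 2)"
  define Q where "Q = br (ebas 1) (ebas 3)"
  define R where "R = br (ebas 2) (ebas 3)"
  have m11: "mu0 (ebas 1) (ebas 1) = ebas 2" and m12: "mu0 (ebas 1) (ebas 2) = ebas 3"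
   and m13: "mu0 (ebas 1) (ebas 3) = 0" and m21: "mu0 (ebas 2) (ebas 1) = ebas 3"
   and m22: "mu0 (ebas 2) (ebas 2) = 0"
    by (simp_all add: veq3)
  have e1: "2 *s mu0 (ebas 1) P = Q" using tp[of "ebas 1" "ebas 1" "ebas 2"]
    by (simp add: m11 m12 alt P_def Q_def)
  have e2: "2 *s mu0 (ebas 1) Q = R" using tp[of "ebas 1" "ebas 1" "ebas 3"]
    by (simp add: m11 m13 z0 Q_def R_def)
  have e3: "2 *s mu0 (ebas 2) P = - R" using tp[of "ebas 2" "ebas 1" "ebas 2"]
    by (simp add: m21 m22 z0 P_def R_def asym[of "ebas 3" "ebas 2"])
  have c: "P$1 = 0" "Q$1 = 0" "Q$2 = 0" "Q$3 = 2 * P$2" "R$1 = 0" "R$2 = 0" "R$3 = 0"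
    using e1 e2 e3 by (auto simp: veq3)
  show ?thesis
  proof (rule ext, rule ext)
    fix x y
    show "br x y = TP (br (ebas 1) (ebas 2) $ 2) (br (ebas 1) (ebas 2) $ 3) x y"
      unfolding bil_expand[OF bil, of x y]
      using c unfolding P_def Q_def R_def
      by (simp add: veq3 alt asym[of "ebas 2" "ebas 1"] asym[of "ebas 3" "ebas 1"] asym[of "ebas 3" "ebas 2"] algebra_simps)
  qed
qed

lemma iso_id: "TP_iso br br"
  unfolding TP_iso_def clinear3_def by (rule exI[of _ id]) auto

lemma iso_10:
  assumes a: "a \<noteq> 0"
  shows "TP_iso (TP a b) (TP 1 0)"
proof -
  define f :: "V3 \<Rightarrow> V3" where "f x = vector [a*x$1, a*b/2*x$1 + a^2*x$2, a^2*b*x$2 + a^3*x$3]" for x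
  define g :: "V3 \<Rightarrow> V3" where "g y = vector [y$1/a, (y$2 - b/2*y$1)/a^2, (y$3 - a^2*b*((y$2 - b/2*y$1)/a^2))/a^3]" for y
  have fc[simp]: "f x $ 1 = a*x$1" "f x $ 2 = a*b/2*x$1 + a^2*x$2" "f x $ 3 = a^2*b*x$2 + a^3*x$3" for x
    by (simp_all add: f_def)
  have gc[simp]: "g x $ 1 = x$1/a" "g x $ 2 = (x$2 - b/2*x$1)/a^2" "g x $ 3 = (x$3 - a^2*b*((x$2 - b/2*x$1)/a^2))/a^3" for x
    by (simp_all add: g_def)
  have "bij f"
  proof (rule o_bij[of g])
    show "g \<circ> f = id" using a by (auto simp: veq3 field_simps power2_eq_square power3_eq_cube)
    show "f \<circ> g = id" using a by (auto simp: veq3 field_simps power2_eq_square power3_eq_cube)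
  qed
  moreover have "clinear3 f" unfolding clinear3_def by (simp add: veq3 algebra_simps)
  moreover have "\<forall>x y. f (mu0 x y) = mu0 (f x) (f y)"
    by (simp add: veq3 algebra_simps power2_eq_square power3_eq_cube)
  moreover have "\<forall>x y. f (TP a b x y) = TP 1 0 (f x) (f y)"
    by (simp add: veq3 algebra_simps power2_eq_square power3_eq_cube)
  ultimately show ?thesis unfolding TP_iso_def by blast
qed

lemma iso_facts:
  assumes "clinear3 f" "bij f" "\<forall>x y. f (mu0 x y) = mu0 (f x) (f y)"
  shows "f (ebas 2) = vector [0, f (ebas 1) $ 1 ^ 2, 2 * f (ebas 1) $ 1 * f (ebas 1) $ 2]"
    "f (ebas 3) = vector [0, 0, f (ebas 1) $ 1 ^ 3]" "f (ebas 1) $ 1 \<noteq> 0"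
proof -
  have m11: "mu0 (ebas 1) (ebas 1) = ebas 2" and m12: "mu0 (ebas 1) (ebas 2) = ebas 3"
    by (simp_all add: veq3)
  show h2: "f (ebas 2) = vector [0, f (ebas 1) $ 1 ^ 2, 2 * f (ebas 1) $ 1 * f (ebas 1) $ 2]"
    using assms(3)[rule_format, of "ebas 1" "ebas 1"] by (simp add: m11 veq3 power2_eq_square)
  show h3: "f (ebas 3) = vector [0, 0, f (ebas 1) $ 1 ^ 3]"
    using assms(3)[rule_format, of "ebas 1" "ebas 2"] h2 by (simp add: m12 veq3 power3_eq_cube power2_eq_square)
  have f0: "f 0 = 0" using assms(1) unfolding clinear3_def by (metis vector_smult_lzero)
  show "f (ebas 1) $ 1 \<noteq> 0"
  proof
    assume "f (ebas 1) $ 1 = 0"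
    then have "f (ebas 3) = f 0" using h3 f0 by (simp add: veq3)
    then have "ebas 3 = 0" using assms(2) by (simp add: bij_def inj_eq)
    then show False by (simp add: veq3)
  qed
qed

theorem mainTheorem3:
  shows "(\<forall>br. is_TP_on_mu0 br \<longrightarrow>
            TP_iso br (TP 1 0) \<or> (\<exists>\<alpha>. TP_iso br (TP 0 \<alpha>)))
       \<and> is_TP_on_mu0 (TP 1 0) \<and> (\<forall>\<alpha>. is_TP_on_mu0 (TP 0 \<alpha>))
       \<and> (\<forall>\<alpha>. \<not> TP_iso (TP 1 0) (TP 0 \<alpha>))
       \<and> (\<forall>\<alpha> \<beta>. TP_iso (TP 0 \<alpha>) (TP 0 \<beta>) \<longrightarrow> \<alpha> = \<beta>)"
proof (intro conjI allI impI)
  fix br assume h: "is_TP_on_mu0 br"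
  define a where "a = br (ebas 1) (ebas 2) $ 2"
  define b where "b = br (ebas 1) (ebas 2) $ 3"
  have e: "br = TP a b" using classify[OF h] by (simp add: a_def b_def)
  show "TP_iso br (TP 1 0) \<or> (\<exists>\<alpha>. TP_iso br (TP 0 \<alpha>))"
  proof (cases "a = 0")
    case True then show ?thesis using e iso_id by auto
  next
    case False then show ?thesis using e iso_10 by auto
  qed
next
  show "is_TP_on_mu0 (TP 1 0)" by (rule TP_is)
next
  fix \<alpha> show "is_TP_on_mu0 (TP 0 \<alpha>)" by (rule TP_is)
next
  fix \<alpha> show "\<not> TP_iso (TP 1 0) (TP 0 \<alpha>)"
  proof
    assume "TP_iso (TP 1 0) (TP 0 \<alpha>)"
    then obtain f where f: "clinear3 f" "bij f" "\<forall>x y. f (mu0 x y) = mu0 (f x) (f y)"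
      "\<forall>x y. f (TP 1 0 x y) = TP 0 \<alpha> (f x) (f y)" unfolding TP_iso_def by blast
    note I = iso_facts[OF f(1-3)]
    have "TP 1 0 (ebas 1) (ebas 2) = ebas 2" by (simp add: veq3)
    then have "f (ebas 2) = TP 0 \<alpha> (f (ebas 1)) (f (ebas 2))" using f(4) by metis
    then have "f (ebas 2) $ 2 = TP 0 \<alpha> (f (ebas 1)) (f (ebas 2)) $ 2" by (rule arg_cong[where f="\<lambda>v. v $ 2"])
    then have "f (ebas 2) $ 2 = 0" by (simp only: TP_c mult_zero_left)
    then show False using I by simp
  qed
next
  fix \<alpha> \<beta> assume "TP_iso (TP 0 \<alpha>) (TP 0 \<beta>)"
  then obtain f where f: "clinear3 f" "bij f" "\<forall>x y. f (mu0 x y) = mu0 (f x) (f y)"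
      "\<forall>x y. f (TP 0 \<alpha> x y) = TP 0 \<beta> (f x) (f y)" unfolding TP_iso_def by blast
  note I = iso_facts[OF f(1-3)]
  have "TP 0 \<alpha> (ebas 1) (ebas 2) = \<alpha> *s ebas 3" by (simp add: veq3)
  moreover have "f (\<alpha> *s ebas 3) = \<alpha> *s f (ebas 3)" using f(1) unfolding clinear3_def by blast
  ultimately have "\<alpha> *s f (ebas 3) = TP 0 \<beta> (f (ebas 1)) (f (ebas 2))" using f(4) by metis
  then have "\<alpha> * f (ebas 1) $ 1 ^ 3 = \<beta> * f (ebas 1) $ 1 ^ 3"
    using I by (simp add: veq3 power2_eq_square power3_eq_cube algebra_simps)
  then show "\<alpha> = \<beta>" using I by simp
qed

end
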